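(* Let $n,m\ge1$, $r>0$, and let $\mathbf b_1,\dots,\mathbf b_m\in[0,\infty)^n$ be nonzero vectors. Put $D_{ij}=\frac{r}{m}(\mathbf b_i\cdot\mathbf b_j)$ and $\overline D=\max_{i,j}D_{ij}$. Define $\alpha^{(t)}\in\mathbb{R}^m$, $t\ge0$, by $\alpha^{(0)}_k=\sqrt{1/(\overline D m)}$ for all $k$, and, given $\alpha^{(t)}$: let $E_i^{(t)}=\sum_{j=1}^m D_{ij}\alpha^{(t)}_i\alpha^{(t)}_j-1$, choose $k=k_t$ with $|E^{(t)}_k|=\max_i|E^{(t)}_i|$, set $\alpha^{(t+1)}_i=\alpha^{(t)}_i$ for $i\neq k$ and $\alpha^{(t+1)}_k=\frac{-s+\sqrt{s^2+4D_{kk}}}{2D_{kk}}$ with $s=\sum_{i\ne k}D_{ik}\alpha^{(t)}_i$. Let $E^{(t)}=\sum_{i=1}^m|E^{(t)}_i|$. Then $\lim_{t\to\infty}E^{(t)}=0$. *)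

theory Defs
  imports "HOL-Analysis.Analysis"
begin

text \<open>Vectors in [0,inf)^n are modelled as functions nat => real, components indexed by l < n;
  the m vectors b_1..b_m are b 0, ..., b (m-1).\<close>

definition dotp :: "nat \<Rightarrow> (nat \<Rightarrow> real) \<Rightarrow> (nat \<Rightarrow> real) \<Rightarrow> real" where
  "dotp n x y = (\<Sum>l<n. x l * y l)"

definition Dmat :: "nat \<Rightarrow> nat \<Rightarrow> real \<Rightarrow> (nat \<Rightarrow> nat \<Rightarrow> real) \<Rightarrow> nat \<Rightarrow> nat \<Rightarrow> real" where
  "Dmat n m r b i j = r / real m * dotp n (b i) (b j)"

definition Dbar :: "nat \<Rightarrow> nat \<Rightarrow> real \<Rightarrow> (nat \<Rightarrow> nat \<Rightarrow> real) \<Rightarrow> real" where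
  "Dbar n m r b = Max {Dmat n m r b i j | i j. i < m \<and> j < m}"

definition Ecomp :: "nat \<Rightarrow> nat \<Rightarrow> real \<Rightarrow> (nat \<Rightarrow> nat \<Rightarrow> real) \<Rightarrow> (nat \<Rightarrow> real) \<Rightarrow> nat \<Rightarrow> real" where
  "Ecomp n m r b \<alpha> i = (\<Sum>j<m. Dmat n m r b i j * \<alpha> i * \<alpha> j) - 1"

definition Etot :: "nat \<Rightarrow> nat \<Rightarrow> real \<Rightarrow> (nat \<Rightarrow> nat \<Rightarrow> real) \<Rightarrow> (nat \<Rightarrow> real) \<Rightarrow> real" where
  "Etot n m r b \<alpha> = (\<Sum>i<m. \<bar>Ecomp n m r b \<alpha> i\<bar>)"

end

theory Submission imports Defs begin

lemma if_sum_const: "(\<Sum>j\<in>A. if P then f j else (0::real)) = (if P then \<Sum>j\<in>A. f j else 0)"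
  by auto

lemma quad_expand:
  fixes D :: "nat \<Rightarrow> nat \<Rightarrow> real"
  assumes sym: "\<And>i j. i<m \<Longrightarrow> j<m \<Longrightarrow> D i j = D j i" and k: "k<m"
  shows "(\<Sum>i<m. \<Sum>j<m. D i j * (\<alpha> i + (if i = k then \<delta> else 0)) * (\<alpha> j + (if j = k then \<delta> else 0)))
     = (\<Sum>i<m. \<Sum>j<m. D i j * \<alpha> i * \<alpha> j) + 2*\<delta>*(\<Sum>i<m. D i k * \<alpha> i) + D k k * \<delta>^2"
proof -
  have "(\<Sum>i<m. \<Sum>j<m. D i j * (\<alpha> i + (if i = k then \<delta> else 0)) * (\<alpha> j + (if j = k then \<delta> else 0)))
    = (\<Sum>i<m. \<Sum>j<m. D i j * \<alpha> i * \<alpha> j + (if j = k then D i j * \<alpha> i * \<delta> else 0)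
        + (if i = k then D i j * \<alpha> j * \<delta> else 0) + (if i = k then (if j = k then D i j * \<delta>^2 else 0) else 0))"
    by (intro sum.cong refl) (auto simp: algebra_simps power2_eq_square)
  also have "\<dots> = (\<Sum>i<m. \<Sum>j<m. D i j * \<alpha> i * \<alpha> j) + (\<Sum>i<m. D i k * \<alpha> i * \<delta>)
     + (\<Sum>j<m. D k j * \<alpha> j * \<delta>) + D k k * \<delta>^2"
    using k by (simp add: sum.distrib if_sum_const)
  also have "(\<Sum>j<m. D k j * \<alpha> j * \<delta>) = (\<Sum>i<m. D i k * \<alpha> i * \<delta>)"
    using k sym by (intro sum.cong) auto
  also have "(\<Sum>i<m. D i k * \<alpha> i * \<delta>) = \<delta> * (\<Sum>i<m. D i k * \<alpha> i)"
    by (simp add: sum_distrib_left algebra_simps)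
  finally show ?thesis by simp
qed

lemma quad_root:
  fixes d s y :: real
  assumes d: "d > 0" and y: "y = (- s + sqrt (s\<^sup>2 + 4 * d)) / (2 * d)"
  shows "d * y^2 + s * y = 1" and "y > 0"
proof -
  define q where "q = sqrt (s\<^sup>2 + 4 * d)"
  have q2: "q^2 = s^2 + 4*d" unfolding q_def using d by (simp add: add_nonneg_nonneg)
  have "sqrt (s^2) < q" unfolding q_def using d by (intro real_sqrt_less_mono) simp
  hence "q > \<bar>s\<bar>" by simp
  hence qs: "q - s > 0" by auto
  have yq: "y = (q - s) / (2*d)" using y q_def by simp
  show "y > 0" using yq qs d by simp
  have e: "2*d*y = q - s" using yq d by simp
  have "4*d*(d * y^2 + s * y) = (2*d*y)^2 + 2 * s * (2*d*y)" by (simp add: algebra_simps power2_eq_square)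
  hence "4*d*(d * y^2 + s * y) = (q-s)^2 + 2 * s * (q-s)" unfolding e .
  also have "\<dots> = q^2 - s^2" by (simp add: algebra_simps power2_eq_square)
  finally show "d * y^2 + s * y = 1" using q2 d by simp
qed

theorem lemma5:
  fixes n m :: nat and r :: real
    and b :: "nat \<Rightarrow> nat \<Rightarrow> real"
    and \<alpha> :: "nat \<Rightarrow> nat \<Rightarrow> real"
    and k :: "nat \<Rightarrow> nat"
  assumes "n \<ge> 1" and "m \<ge> 1" and "r > 0"
    and b_nonneg: "\<And>i l. i < m \<Longrightarrow> l < n \<Longrightarrow> b i l \<ge> 0"
    and b_nonzero: "\<And>i. i < m \<Longrightarrow> \<exists>l<n. b i l \<noteq> 0"
    and init: "\<And>i. i < m \<Longrightarrow> \<alpha> 0 i = sqrt (1 / (Dbar n m r b * real m))"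
    and k_range: "\<And>t. k t < m"
    and k_max: "\<And>t i. i < m \<Longrightarrow>
        \<bar>Ecomp n m r b (\<alpha> t) i\<bar> \<le> \<bar>Ecomp n m r b (\<alpha> t) (k t)\<bar>"
    and step_other: "\<And>t i. i < m \<Longrightarrow> i \<noteq> k t \<Longrightarrow> \<alpha> (Suc t) i = \<alpha> t i"
    and step_k: "\<And>t. \<alpha> (Suc t) (k t) =
        (let s = (\<Sum>i\<in>{..<m} - {k t}. Dmat n m r b i (k t) * \<alpha> t i);
             d = Dmat n m r b (k t) (k t)
         in (- s + sqrt (s\<^sup>2 + 4 * d)) / (2 * d))"
  shows "(\<lambda>t. Etot n m r b (\<alpha> t)) \<longlonglongrightarrow> 0"
proof -
  define D where "D = Dmat n m r b"
  have sym: "\<And>i j. D i j = D j i" unfolding D_def Dmat_def dotp_def by (simp add: mult.commute)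
  have Dnn: "\<And>i j. i < m \<Longrightarrow> j < m \<Longrightarrow> D i j \<ge> 0"
    unfolding D_def Dmat_def dotp_def using \<open>r > 0\<close> b_nonneg
    by (intro mult_nonneg_nonneg sum_nonneg) auto
  have Dpos: "\<And>i. i < m \<Longrightarrow> D i i > 0"
  proof -
    fix i assume i: "i < m"
    obtain l where l: "l < n" "b i l \<noteq> 0" using b_nonzero[OF i] by auto
    have "dotp n (b i) (b i) > 0" unfolding dotp_def
      using l by (intro sum_pos2[of _ l]) (auto simp: zero_less_mult_iff)
    thus "D i i > 0" unfolding D_def Dmat_def using \<open>r > 0\<close> \<open>m \<ge> 1\<close> by simp
  qed
  define Db where "Db = Dbar n m r b"
  have finS: "finite {D i j | i j. i < m \<and> j < m}"
  proof -
    have "{D i j | i j. i < m \<and> j < m} \<subseteq> (\<lambda>(i,j). D i j) ` ({..<m} \<times> {..<m})" by auto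
    thus ?thesis by (rule finite_subset) auto
  qed
  have DleDb: "\<And>i j. i < m \<Longrightarrow> j < m \<Longrightarrow> D i j \<le> Db"
    unfolding Db_def Dbar_def D_def[symmetric] using finS by (intro Max_ge) auto
  have Dbpos: "Db > 0" using DleDb[of 0 0] Dpos[of 0] \<open>m \<ge> 1\<close> by simp
  define dmin where "dmin = Min ((\<lambda>i. D i i) ` {..<m})"
  have dmin_le: "\<And>i. i < m \<Longrightarrow> dmin \<le> D i i" unfolding dmin_def by auto
  have ne: "{..<m} \<noteq> {}" using \<open>m \<ge> 1\<close> by (metis lessThan_iff empty_iff less_le_trans zero_less_one)
  have dmin_pos: "dmin > 0" unfolding dmin_def using ne Dpos
    by (subst Min_gr_iff) auto
  define s where "s t = (\<Sum>i\<in>{..<m} - {k t}. D i (k t) * \<alpha> t i)" for t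
  have stepk: "\<alpha> (Suc t) (k t) = (- s t + sqrt ((s t)\<^sup>2 + 4 * D (k t) (k t))) / (2 * D (k t) (k t))" for t
    using step_k[of t] unfolding s_def D_def Let_def by simp
  have qeq: "D (k t) (k t) * (\<alpha> (Suc t) (k t))^2 + s t * \<alpha> (Suc t) (k t) = 1" for t
    using quad_root(1)[OF Dpos[OF k_range] stepk] .
  have pos: "\<And>i. i < m \<Longrightarrow> \<alpha> t i > 0" for t
  proof (induction t)
    case 0
    then show ?case using init Dbpos \<open>m \<ge> 1\<close> by (simp add: Db_def[symmetric])
  next
    case (Suc t)
    then show ?case using step_other quad_root(2)[OF Dpos[OF k_range] stepk] by (cases "i = k t") auto
  qed

  define x where "x t = \<alpha> t (k t)" for t
  define y where "y t = \<alpha> (Suc t) (k t)" for t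
  define dk where "dk t = D (k t) (k t)" for t
  define Q where "Q \<beta> = (\<Sum>i<m. \<Sum>j<m. D i j * \<beta> i * \<beta> j)" for \<beta>
  define f where "f \<beta> = Q \<beta> / 2 - (\<Sum>i<m. ln (\<beta> i))" for \<beta>
  define F where "F t = f (\<alpha> t)" for t
  have xpos: "x t > 0" for t unfolding x_def using pos k_range by auto
  have ypos: "y t > 0" for t unfolding y_def using pos k_range by auto
  have dkpos: "dk t > 0" for t unfolding dk_def using Dpos k_range by auto
  have sumk: "(\<Sum>i<m. D i (k t) * \<alpha> t i) = dk t * x t + s t" for t
    unfolding s_def dk_def x_def using k_range[of t] by (subst sum.remove[of _ "k t"]) auto
  have Qstep: "Q (\<alpha> (Suc t)) = Q (\<alpha> t) + 2*(y t - x t)*(\<Sum>i<m. D i (k t) * \<alpha> t i) + dk t * (y t - x t)^2" for t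
  proof -
    have "Q (\<alpha> (Suc t)) = (\<Sum>i<m. \<Sum>j<m. D i j * (\<alpha> t i + (if i = k t then y t - x t else 0)) * (\<alpha> t j + (if j = k t then y t - x t else 0)))"
      unfolding Q_def using step_other by (intro sum.cong refl) (auto simp: x_def y_def)
    also have "\<dots> = Q (\<alpha> t) + 2*(y t - x t)*(\<Sum>i<m. D i (k t) * \<alpha> t i) + dk t * (y t - x t)^2"
      unfolding Q_def dk_def by (rule quad_expand) (use sym k_range in auto)
    finally show ?thesis .
  qed
  have lnstep: "(\<Sum>i<m. ln (\<alpha> (Suc t) i)) = (\<Sum>i<m. ln (\<alpha> t i)) + ln (y t) - ln (x t)" for t
  proof -
    have "(\<Sum>i<m. ln (\<alpha> (Suc t) i)) = ln (y t) + (\<Sum>i\<in>{..<m}-{k t}. ln (\<alpha> (Suc t) i))"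
      unfolding y_def using k_range[of t] by (subst sum.remove[of _ "k t"]) auto
    also have "(\<Sum>i\<in>{..<m}-{k t}. ln (\<alpha> (Suc t) i)) = (\<Sum>i\<in>{..<m}-{k t}. ln (\<alpha> t i))"
      using step_other by (intro sum.cong) auto
    also have "(\<Sum>i<m. ln (\<alpha> t i)) = ln (x t) + (\<Sum>i\<in>{..<m}-{k t}. ln (\<alpha> t i))"
      unfolding x_def using k_range[of t] by (subst sum.remove[of _ "k t"]) auto
    ultimately show ?thesis by simp
  qed
  have sy: "s t * y t = 1 - dk t * (y t)^2" for t
    using qeq[of t] unfolding y_def dk_def by simp
  have descent: "dk t / 2 * (x t - y t)^2 \<le> F t - F (Suc t)" for t
  proof -
    have hs: "(y t - x t) * s t = 1 - dk t * (y t)^2 - x t / y t + dk t * (x t * y t)"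
    proof -
      have "(y t - x t) * s t * y t = (y t - x t) * (s t * y t)" by (simp add: mult.assoc)
      also have "\<dots> = (y t - x t) * (1 - dk t * (y t)^2)" using sy[of t] by simp
      also have "\<dots> = (1 - dk t * (y t)^2 - x t / y t + dk t * (x t * y t)) * y t"
        using ypos[of t] by (simp add: field_simps power2_eq_square)
      finally have "(y t - x t) * s t * y t = (1 - dk t * (y t)^2 - x t / y t + dk t * (x t * y t)) * y t" .
      thus ?thesis using ypos[of t] by simp
    qed
    have hl: "ln (x t) - ln (y t) \<le> x t / y t - 1"
      using ln_le_minus_one[of "x t / y t"] xpos[of t] ypos[of t] by (simp add: ln_div)
    have e1: "F t - F (Suc t) = - ((y t - x t) * s t) - dk t * (x t * y t) + dk t * (x t)^2 - dk t * (y t - x t)^2 / 2 + ln (y t) - ln (x t)"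
      unfolding F_def f_def Qstep lnstep sumk by (simp add: field_simps power2_eq_square)
    have e2: "dk t * (y t - x t)^2 = dk t * (x t)^2 - 2 * (dk t * (x t * y t)) + dk t * (y t)^2"
      by (simp add: algebra_simps power2_eq_square)
    have e3: "dk t * (x t - y t)^2 = dk t * (y t - x t)^2" by (simp add: power2_commute)
    show ?thesis using e1 e2 e3 hs hl by linarith
  qed
  have Fdec: "decseq F"
  proof (rule decseq_SucI)
    fix t have "dk t / 2 * (x t - y t)^2 \<ge> 0" using dkpos[of t] by simp
    thus "F (Suc t) \<le> F t" using descent[of t] by linarith
  qed
  have FleF0: "F t \<le> F 0" for t using Fdec by (simp add: decseq_def)
  define h where "h z = dmin / 2 * z^2 - ln z" for z
  define c where "c = 1 - 1 / (2 * dmin)"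
  have hc: "h z \<ge> c" if "z > 0" for z
  proof -
    have "ln z \<le> z - 1" using ln_le_minus_one that .
    moreover have "(dmin * z - 1)^2 / (2 * dmin) \<ge> 0" using dmin_pos by simp
    moreover have "(dmin * z - 1)^2 / (2 * dmin) = dmin / 2 * z^2 - z + 1 / (2 * dmin)"
      using dmin_pos by (simp add: field_simps power2_eq_square)
    ultimately show ?thesis unfolding h_def c_def by linarith
  qed
  have fh: "f \<beta> \<ge> (\<Sum>i<m. h (\<beta> i))" if bpos: "\<And>i. i < m \<Longrightarrow> \<beta> i > 0" for \<beta>
  proof -
    have "(\<Sum>i<m. dmin / 2 * (\<beta> i)^2) \<le> (\<Sum>i<m. D i i * \<beta> i * \<beta> i) / 2"
      unfolding sum_divide_distrib
    proof (rule sum_mono)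
      fix i assume "i \<in> {..<m}"
      hence "dmin * (\<beta> i * \<beta> i) \<le> D i i * (\<beta> i * \<beta> i)" using dmin_le by (intro mult_right_mono) auto
      thus "dmin / 2 * (\<beta> i)^2 \<le> D i i * \<beta> i * \<beta> i / 2" by (simp add: power2_eq_square algebra_simps)
    qed
    also have "(\<Sum>i<m. D i i * \<beta> i * \<beta> i) \<le> Q \<beta>"
      unfolding Q_def
    proof (rule sum_mono)
      fix i assume i: "i \<in> {..<m}"
      show "D i i * \<beta> i * \<beta> i \<le> (\<Sum>j<m. D i j * \<beta> i * \<beta> j)"
        using i Dnn bpos[THEN less_imp_le]
        by (intro member_le_sum[of i _ "\<lambda>j. D i j * \<beta> i * \<beta> j"]) (auto intro!: mult_nonneg_nonneg)
    qed
    finally show ?thesis unfolding f_def h_def by (simp add: sum_subtractf)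
  qed
  define M where "M = F 0 - (real m - 1) * c"
  have hM: "h (\<alpha> t i) \<le> M" if i: "i < m" for t i
  proof -
    have "(\<Sum>j<m. h (\<alpha> t j)) = h (\<alpha> t i) + (\<Sum>j\<in>{..<m}-{i}. h (\<alpha> t j))"
      using i by (subst sum.remove[of _ i]) auto
    moreover have "real (card ({..<m}-{i})) * c \<le> (\<Sum>j\<in>{..<m}-{i}. h (\<alpha> t j))"
      using hc pos by (intro sum_bounded_below) auto
    moreover have "card ({..<m}-{i}) = m - 1" using i by simp
    moreover have "f (\<alpha> t) \<ge> (\<Sum>j<m. h (\<alpha> t j))" using fh pos by auto
    moreover have "real (m - 1) = real m - 1" using \<open>m \<ge> 1\<close> by simp
    ultimately show ?thesis using FleF0[of t] unfolding M_def F_def by auto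
  qed
  define a where "a = exp (- M)"
  define A where "A = 1 + 2 * (1 + \<bar>M\<bar>) / dmin"
  have apos: "a > 0" unfolding a_def by simp
  have lowb: "a \<le> \<alpha> t i" if i: "i < m" for t i
  proof -
    have z: "\<alpha> t i > 0" using pos i by auto
    have "dmin / 2 * (\<alpha> t i)^2 \<ge> 0" using dmin_pos by simp
    hence "ln (\<alpha> t i) \<ge> - M" using hM[OF i, of t] unfolding h_def by linarith
    hence "exp (- M) \<le> exp (ln (\<alpha> t i))" by simp
    thus ?thesis using z unfolding a_def by simp
  qed
  have upb: "\<alpha> t i \<le> A" if i: "i < m" for t i
  proof -
    define z where "z = \<alpha> t i"
    have z: "z > 0" using pos i z_def by auto
    have "ln z \<le> z - 1" using ln_le_minus_one z .
    hence q: "dmin * z^2 \<le> 2 * \<bar>M\<bar> + 2 * z" using hM[OF i, of t] unfolding h_def z_def[symmetric] by linarith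
    have Age: "A \<ge> 1" unfolding A_def using dmin_pos by simp
    show ?thesis
    proof (cases "z \<le> 1")
      case True thus ?thesis using Age z_def by linarith
    next
      case False
      hence "2 * \<bar>M\<bar> \<le> 2 * \<bar>M\<bar> * z" by (simp add: mult_le_cancel_left1)
      hence "dmin * z * z \<le> (2 * (1 + \<bar>M\<bar>)) * z" using q by (simp add: power2_eq_square algebra_simps)
      hence "dmin * z \<le> 2 * (1 + \<bar>M\<bar>)" using z by simp
      hence "z \<le> 2 * (1 + \<bar>M\<bar>) / dmin" using dmin_pos by (simp add: field_simps)
      thus ?thesis unfolding A_def z_def by linarith
    qed
  qed
  define B where "B = Db * A + 1 / a"
  define C where "C = 2 / dmin * B^2"
  have Ek: "Ecomp n m r b (\<alpha> t) (k t) = (x t - y t) * (dk t * x t + 1 / y t)" for t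
  proof -
    have "(\<Sum>j<m. D (k t) j * \<alpha> t (k t) * \<alpha> t j) = x t * (\<Sum>i<m. D i (k t) * \<alpha> t i)"
      unfolding x_def sum_distrib_left by (intro sum.cong refl) (simp add: sym[of "k t"] algebra_simps)
    hence "Ecomp n m r b (\<alpha> t) (k t) = x t * (dk t * x t + s t) - 1"
      unfolding Ecomp_def D_def[symmetric] sumk by simp
    also have "x t * s t = x t / y t - dk t * (x t * y t)"
    proof -
      have "x t * s t * y t = x t * (s t * y t)" by (simp add: mult.assoc)
      also have "\<dots> = x t * (1 - dk t * (y t)^2)" using sy[of t] by simp
      also have "\<dots> = (x t / y t - dk t * (x t * y t)) * y t"
        using ypos[of t] by (simp add: field_simps power2_eq_square)
      finally have "x t * s t * y t = (x t / y t - dk t * (x t * y t)) * y t" .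
      thus ?thesis using ypos[of t] by simp
    qed
    hence "x t * (dk t * x t + s t) - 1 = (x t - y t) * (dk t * x t + 1 / y t)"
      using ypos[of t] by (simp add: algebra_simps power2_eq_square)
    finally show ?thesis .
  qed
  have Ebound: "(Ecomp n m r b (\<alpha> t) (k t))^2 \<le> C * (F t - F (Suc t))" for t
  proof -
    have g0: "dk t * x t + 1 / y t > 0" using dkpos xpos ypos by (simp add: add_pos_pos)
    have "dk t * x t \<le> Db * A" unfolding dk_def x_def
      using DleDb[OF k_range k_range] upb[OF k_range] Dpos[OF k_range] pos[OF k_range] Dbpos
      by (intro mult_mono) (auto intro: less_imp_le)
    moreover have "1 / y t \<le> 1 / a" using lowb[OF k_range, of "Suc t" t] apos ypos[of t] unfolding y_def
      by (intro divide_left_mono) auto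
    ultimately have gB: "dk t * x t + 1 / y t \<le> B" unfolding B_def by linarith
    have "(Ecomp n m r b (\<alpha> t) (k t))^2 = (x t - y t)^2 * (dk t * x t + 1 / y t)^2"
      unfolding Ek by (simp add: power_mult_distrib)
    also have "\<dots> \<le> (x t - y t)^2 * B^2"
      using g0 gB by (intro mult_left_mono power_mono) auto
    also have "(x t - y t)^2 \<le> 2 / dmin * (F t - F (Suc t))"
    proof -
      have "dmin / 2 * (x t - y t)^2 \<le> dk t / 2 * (x t - y t)^2"
        unfolding dk_def using dmin_le[OF k_range] by (intro mult_right_mono) auto
      with descent[of t] have "dmin / 2 * (x t - y t)^2 \<le> F t - F (Suc t)" by linarith
      thus ?thesis using dmin_pos by (simp add: field_simps)
    qed
    hence "(x t - y t)^2 * B^2 \<le> 2 / dmin * (F t - F (Suc t)) * B^2"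
      by (intro mult_right_mono) auto
    finally have "(Ecomp n m r b (\<alpha> t) (k t))^2 \<le> 2 / dmin * (F t - F (Suc t)) * B^2" .
    moreover have "2 / dmin * (F t - F (Suc t)) * B^2 = C * (F t - F (Suc t))"
      unfolding C_def by (simp add: mult_ac)
    ultimately show ?thesis by simp
  qed
  have Flow: "\<forall>t. real m * c \<le> F t"
  proof
    fix t
    have "real (card {..<m}) * c \<le> (\<Sum>i<m. h (\<alpha> t i))" using hc pos by (intro sum_bounded_below) auto
    thus "real m * c \<le> F t" using fh[of "\<alpha> t"] pos unfolding F_def by auto
  qed
  obtain L where FL: "F \<longlonglongrightarrow> L" using decseq_convergent[OF Fdec Flow] by blast
  have "(\<lambda>t. F t - F (Suc t)) \<longlonglongrightarrow> L - L"
    using FL LIMSEQ_Suc[OF FL] by (intro tendsto_diff)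
  hence "(\<lambda>t. C * (F t - F (Suc t))) \<longlonglongrightarrow> C * 0" by (intro tendsto_mult) auto
  hence CF: "(\<lambda>t. C * (F t - F (Suc t))) \<longlonglongrightarrow> 0" by simp
  have E2: "(\<lambda>t. (Ecomp n m r b (\<alpha> t) (k t))^2) \<longlonglongrightarrow> 0"
  proof (rule tendsto_sandwich[of "\<lambda>_. 0" _ _ "\<lambda>t. C * (F t - F (Suc t))"])
    show "\<forall>\<^sub>F t in sequentially. 0 \<le> (Ecomp n m r b (\<alpha> t) (k t))^2" by simp
    show "\<forall>\<^sub>F t in sequentially. (Ecomp n m r b (\<alpha> t) (k t))^2 \<le> C * (F t - F (Suc t))"
      by (intro always_eventually allI Ebound)
    show "(\<lambda>_. 0) \<longlonglongrightarrow> (0::real)" by simp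
    show "(\<lambda>t. C * (F t - F (Suc t))) \<longlonglongrightarrow> 0" by (rule CF)
  qed
  have "(\<lambda>t. sqrt ((Ecomp n m r b (\<alpha> t) (k t))^2)) \<longlonglongrightarrow> sqrt 0"
    using E2 by (intro tendsto_real_sqrt)
  hence "(\<lambda>t. \<bar>Ecomp n m r b (\<alpha> t) (k t)\<bar>) \<longlonglongrightarrow> 0" by simp
  hence "(\<lambda>t. real m * \<bar>Ecomp n m r b (\<alpha> t) (k t)\<bar>) \<longlonglongrightarrow> real m * 0"
    by (intro tendsto_mult tendsto_const)
  hence lim1: "(\<lambda>t. real m * \<bar>Ecomp n m r b (\<alpha> t) (k t)\<bar>) \<longlonglongrightarrow> 0" by simp
  have up: "Etot n m r b (\<alpha> t) \<le> real m * \<bar>Ecomp n m r b (\<alpha> t) (k t)\<bar>" for t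
  proof -
    have "Etot n m r b (\<alpha> t) \<le> (\<Sum>i<m. \<bar>Ecomp n m r b (\<alpha> t) (k t)\<bar>)"
      unfolding Etot_def using k_max by (intro sum_mono) auto
    thus ?thesis by simp
  qed
  have low: "Etot n m r b (\<alpha> t) \<ge> 0" for t unfolding Etot_def by (intro sum_nonneg) auto
  show ?thesis
  proof (rule tendsto_sandwich[of "\<lambda>_. 0" _ _ "\<lambda>t. real m * \<bar>Ecomp n m r b (\<alpha> t) (k t)\<bar>"])
    show "\<forall>\<^sub>F t in sequentially. 0 \<le> Etot n m r b (\<alpha> t)" by (intro always_eventually allI low)
    show "\<forall>\<^sub>F t in sequentially. Etot n m r b (\<alpha> t) \<le> real m * \<bar>Ecomp n m r b (\<alpha> t) (k t)\<bar>"
      by (intro always_eventually allI up)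
    show "(\<lambda>_. 0) \<longlonglongrightarrow> (0::real)" by simp
    show "(\<lambda>t. real m * \<bar>Ecomp n m r b (\<alpha> t) (k t)\<bar>) \<longlonglongrightarrow> 0" by (rule lim1)
  qed
qed
end
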